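(* Let $f:[0,\infty)\to[0,\infty)$ be continuous and assume its Hirsch function $h_f$ is well defined on $(0,\infty)$. Then the following are equivalent: (a) $h_f(\theta)=f(f(\theta))$ for all $\theta>0$; (b) $f(f(f(x)))=x\,f(f(x))$ for all $x\ge 0$.
   Context: Hirsch function: for $f:[0,\infty)\to[0,\infty)$ and $\theta>0$, $h_f(\theta)=x$ if and only if $f(x)=\theta x$, where, if $f(0)=0$, the trivial solution $x=0$ is not taken into account. It is required (for $h_f$ to be a function) that for every $\theta>0$ this equation has exactly one such solution $x$. *)

theory Defs
  imports "HOL-Analysis.Analysis"
begin

text \<open>Functions f : [0,inf) -> [0,inf) are modelled as real functions; only their values
on {0..} matter.  x is an admissible solution of f x = theta * x if x >= 0, f x = theta * x,
and x is not the trivial solution 0 in the case f 0 = 0.\<close>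

definition hirsch_sol :: "(real \<Rightarrow> real) \<Rightarrow> real \<Rightarrow> real \<Rightarrow> bool" where
  "hirsch_sol f \<theta> x \<longleftrightarrow> x \<ge> 0 \<and> f x = \<theta> * x \<and> \<not> (f 0 = 0 \<and> x = 0)"

definition hirsch_well_defined :: "(real \<Rightarrow> real) \<Rightarrow> bool" where
  "hirsch_well_defined f \<longleftrightarrow> (\<forall>\<theta>>0. \<exists>!x. hirsch_sol f \<theta> x)"

definition hirsch :: "(real \<Rightarrow> real) \<Rightarrow> real \<Rightarrow> real" where
  "hirsch f \<theta> = (THE x. hirsch_sol f \<theta> x)"

end

theory Submission
  imports Defs
begin

lemma sol_unique:
  assumes "hirsch_well_defined f" "\<theta> > 0" "hirsch_sol f \<theta> a" "hirsch_sol f \<theta> b"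
  shows "a = b"
  using assms unfolding hirsch_well_defined_def by blast

lemma sol_exists:
  assumes "hirsch_well_defined f" "\<theta> > 0"
  obtains x where "hirsch_sol f \<theta> x"
  using assms unfolding hirsch_well_defined_def by blast

lemma g_cont:
  fixes f :: "real \<Rightarrow> real"
  assumes "continuous_on {0..} f" "0 < s" "s \<le> t"
  shows "continuous_on {s..t} (\<lambda>x. f x / x)"
proof -
  have "continuous_on {s..t} f" using assms(1) by (rule continuous_on_subset) (use assms in auto)
  then show ?thesis
    using assms by (intro continuous_on_divide continuous_on_id) auto
qed

lemma f_cont:
  fixes f :: "real \<Rightarrow> real"
  assumes "continuous_on {0..} f" "0 \<le> s"
  shows "continuous_on {s..t} f"
  using assms(1) by (rule continuous_on_subset) (use assms in auto)

lemma two_sided: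
  fixes f :: "real \<Rightarrow> real"
  assumes cont: "continuous_on {0..} f" and wd: "hirsch_well_defined f" and f0: "f 0 = 0"
    and st: "0 < s" "s < t" "t < q" and ft: "f t = 0" and fs: "f s > 0" and fq: "f q > 0"
  shows False
proof -
  define c where "c = min (f s / s) (f q / q) / 2"
  have cpos: "c > 0" using st fs fq by (simp add: c_def)
  have c1: "c \<le> f s / s" "c \<le> f q / q" using cpos unfolding c_def by linarith+
  obtain a where a: "s \<le> a" "a \<le> t" "f a / a = c"
    using IVT2'[of "\<lambda>x. f x / x" t c s] g_cont[OF cont, of s t] st ft c1 cpos by auto
  obtain b where b: "t \<le> b" "b \<le> q" "f b / b = c"
    using IVT'[of "\<lambda>x. f x / x" t c q] g_cont[OF cont, of t q] st ft c1 cpos by auto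
  have "a \<noteq> t" "b \<noteq> t" using a b ft cpos by auto
  hence ab: "a < t" "t < b" using a b by auto
  have "hirsch_sol f c a" using a st cpos unfolding hirsch_sol_def by (auto simp: field_simps)
  moreover have "hirsch_sol f c b" using b st ab cpos unfolding hirsch_sol_def by (auto simp: field_simps)
  ultimately have "a = b" using sol_unique[OF wd cpos] by blast
  thus False using ab by simp
qed

lemma caseA:
  fixes f :: "real \<Rightarrow> real"
  assumes nn: "\<forall>x\<ge>0. f x \<ge> 0" and cont: "continuous_on {0..} f" and wd: "hirsch_well_defined f"
    and f0: "f 0 = 0" and B: "\<forall>x\<ge>0. f (f (f x)) = x * f (f x)"
    and t: "t > 0" "f t = 0" and q: "q > t" "f q > 0"
  shows False
proof -
  have zb: "f s = 0" if "0 < s" "s \<le> t" for s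
  proof (rule ccontr)
    assume "f s \<noteq> 0"
    with nn that have "f s > 0" by (metis less_eq_real_def)
    with that t q have "s < t" by (cases "s = t") auto
    show False using two_sided[OF cont wd f0 \<open>0<s\<close> \<open>s<t\<close> q(1) t(2) \<open>f s > 0\<close> q(2)] .
  qed
  obtain r where r: "hirsch_sol f 1 r" using sol_exists[OF wd] by (metis zero_less_one)
  have r1: "r > 0" "f r = r" using r f0 unfolding hirsch_sol_def by auto
  have rt: "r > t" using zb[of r] r1 by force
  obtain y where y: "t \<le> y" "y \<le> r" "f y = t"
    using IVT'[of f t t r] f_cont[OF cont, of t r] t r1 rt by auto
  have rtpos: "r / t > 0" using r1 t by simp
  obtain r2 where r2: "hirsch_sol f (r/t) r2" using sol_exists[OF wd rtpos] by blast
  have r21: "r2 > 0" "f r2 = r / t * r2" using r2 f0 unfolding hirsch_sol_def by auto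
  have r2t: "r2 > t" using zb[of r2] r21 rtpos by force
  have "r / t * r2 \<ge> r / t * t" using r2t rtpos by (intro mult_left_mono) auto
  hence "f r2 \<ge> y" using r21 t y by simp
  then obtain x where x: "t \<le> x" "x \<le> r2" "f x = y"
    using IVT'[of f t y r2] f_cont[OF cont, of t r2] t y r2t by auto
  have "f (f (f x)) = x * f (f x)" using B x t by auto
  hence "0 = x * t" using x y t by simp
  thus False using x t by simp
qed

lemma caseB:
  fixes f :: "real \<Rightarrow> real"
  assumes nn: "\<forall>x\<ge>0. f x \<ge> 0" and cont: "continuous_on {0..} f" and wd: "hirsch_well_defined f"
    and f0: "f 0 = 0" and B: "\<forall>x\<ge>0. f (f (f x)) = x * f (f x)"
    and t: "t > 0" "f t = 0" and above: "\<forall>q>t. f q = 0"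
  shows False
proof -
  obtain q where q: "hirsch_sol f 1 q" using sol_exists[OF wd] by (metis zero_less_one)
  have q1: "q > 0" "f q = q" using q f0 unfolding hirsch_sol_def by auto
  have qt: "q < t" using q1 t above by (metis linorder_neqE_linordered_idom less_irrefl)
  have pos: "f u > 0" if "0 < u" "u \<le> q" for u
  proof (rule ccontr)
    assume "\<not> f u > 0"
    with nn that have fu: "f u = 0" by (metis less_eq_real_def order.trans less_imp_le)
    with q1 have "u < q" using that by (cases "u = q") auto
    show False using caseA[OF nn cont wd f0 B \<open>0<u\<close> fu \<open>u<q\<close>] q1 by simp
  qed
  have ge: "f u \<ge> u" if "0 < u" "u \<le> q" for u
  proof (rule ccontr)
    assume "\<not> f u \<ge> u"
    define c where "c = f u / u"
    have c: "c > 0" "c < 1" using pos[OF that] that \<open>\<not> f u \<ge> u\<close> by (auto simp: c_def field_simps)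
    obtain v where v: "q \<le> v" "v \<le> t" "f v / v = c"
      using IVT2'[of "\<lambda>x. f x / x" t c q] g_cont[OF cont, of q t] q1 qt t c by auto
    have "v \<noteq> t" using v t c by auto
    have "hirsch_sol f c v" using v q1 c unfolding hirsch_sol_def by (auto simp: field_simps)
    moreover have "hirsch_sol f c u" using that c unfolding hirsch_sol_def c_def by auto
    ultimately have "u = v" using sol_unique[OF wd c(1)] by blast
    hence "u = q" using v that by simp
    thus False using q1 \<open>\<not> f u \<ge> u\<close> by simp
  qed
  have ci: "\<forall>e>0. \<exists>d>0. \<forall>y\<in>{0..}. dist y 0 < d \<longrightarrow> dist (f y) (f 0) < e"
  proof (intro allI impI)
    fix e :: real assume "e > 0"
    have "(0::real) \<in> {0..}" by simp
    then show "\<exists>d>0. \<forall>y\<in>{0..}. dist y 0 < d \<longrightarrow> dist (f y) (f 0) < e"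
      using cont \<open>e > 0\<close> unfolding continuous_on_iff by blast
  qed
  obtain d1 where d1: "d1 > 0" "\<forall>y\<in>{0..}. dist y 0 < d1 \<longrightarrow> dist (f y) (f 0) < q"
    using ci q1 by blast
  obtain d2 where d2: "d2 > 0" "\<forall>y\<in>{0..}. dist y 0 < d2 \<longrightarrow> dist (f y) (f 0) < min d1 q"
    using ci q1 d1 by (metis min_less_iff_conj)
  define x where "x = min (min d2 q) 1 / 2"
  have x: "0 < x" "x < d2" "x < q" "x < 1" using d2 q1 by (auto simp: x_def)
  have fx: "0 < f x" using pos[of x] x by simp
  have fx2: "f x < min d1 q" using d2(2) x f0 by (auto simp: dist_real_def)
  have ffx: "0 < f (f x)" using pos[of "f x"] fx fx2 by simp
  have ffx2: "f (f x) < q" using d1(2) fx fx2 f0 by (auto simp: dist_real_def)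
  have "f (f (f x)) = x * f (f x)" using B x by auto
  moreover have "f (f (f x)) \<ge> f (f x)" using ge[of "f (f x)"] ffx ffx2 by simp
  ultimately have "x * f (f x) \<ge> 1 * f (f x)" by simp
  hence "x \<ge> 1" using ffx by (meson mult_le_cancel_right_pos)
  thus False using x by simp
qed

theorem theorem4:
  fixes f :: "real \<Rightarrow> real"
  assumes "\<forall>x\<ge>0. f x \<ge> 0"
    and "continuous_on {0..} f"
    and "hirsch_well_defined f"
  shows "(\<forall>\<theta>>0. hirsch f \<theta> = f (f \<theta>)) \<longleftrightarrow> (\<forall>x\<ge>0. f (f (f x)) = x * f (f x))"
proof
  note nn = assms(1) and cont = assms(2) and wd = assms(3)
  assume A: "\<forall>\<theta>>0. hirsch f \<theta> = f (f \<theta>)"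
  have pos: "f (f (f x)) = x * f (f x)" if "x > 0" for x
  proof -
    have "\<exists>!y. hirsch_sol f x y" using wd that unfolding hirsch_well_defined_def by blast
    hence "hirsch_sol f x (hirsch f x)" unfolding hirsch_def by (rule theI')
    thus ?thesis using A that unfolding hirsch_sol_def by auto
  qed
  have img: "f ` {0..} \<subseteq> {0..}" using nn by auto
  have c3: "continuous_on {0..} (\<lambda>x. f (f (f x)))"
  proof -
    have "continuous_on {0..} (f \<circ> f)" using continuous_on_compose[OF cont] img
      by (meson cont continuous_on_subset)
    hence "continuous_on {0..} (f \<circ> (f \<circ> f))"
      by (metis comp_apply continuous_on_compose[OF _ continuous_on_subset[OF cont]] image_comp img image_mono order_trans)
    thus ?thesis by (simp add: comp_def)
  qed
  have c2: "continuous_on {0..} (\<lambda>x. f (f x))"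
    using continuous_on_compose[OF cont continuous_on_subset[OF cont img]] by (simp add: comp_def)
  have l3: "((\<lambda>x. f (f (f x))) \<longlongrightarrow> f (f (f 0))) (at_right 0)"
  proof -
    have "((\<lambda>x. f (f (f x))) \<longlongrightarrow> f (f (f 0))) (at 0 within {0..})"
      using c3 by (simp add: continuous_on_def)
    thus ?thesis by (rule tendsto_within_subset) auto
  qed
  have l2: "((\<lambda>x. x * f (f x)) \<longlongrightarrow> 0 * f (f 0)) (at_right 0)"
  proof -
    have "((\<lambda>x. f (f x)) \<longlongrightarrow> f (f 0)) (at 0 within {0..})"
      using c2 by (simp add: continuous_on_def)
    hence "((\<lambda>x. f (f x)) \<longlongrightarrow> f (f 0)) (at_right 0)"
      by (rule tendsto_within_subset) auto
    moreover have "((\<lambda>x. x) \<longlongrightarrow> (0::real)) (at_right 0)"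
      by (simp add: tendsto_ident_at tendsto_within_subset)
    ultimately show ?thesis by (intro tendsto_mult)
  qed
  have ev: "\<forall>\<^sub>F x in at_right 0. f (f (f x)) = x * f (f x)"
    using eventually_at_right_real[of 0 1] by (rule eventually_mono) (use pos in auto)
  have "((\<lambda>x. x * f (f x)) \<longlongrightarrow> f (f (f 0))) (at_right (0::real))"
    using tendsto_cong[OF ev] l3 by simp
  hence "f (f (f 0)) = 0 * f (f 0)" using l2 tendsto_unique trivial_limit_at_right_real by blast
  thus "\<forall>x\<ge>0. f (f (f x)) = x * f (f x)" using pos by (metis less_eq_real_def)
next
  note nn = assms(1) and cont = assms(2) and wd = assms(3)
  assume B: "\<forall>x\<ge>0. f (f (f x)) = x * f (f x)"
  show "\<forall>\<theta>>0. hirsch f \<theta> = f (f \<theta>)"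
  proof (intro allI impI)
    fix \<theta> :: real assume th: "\<theta> > 0"
    have sol: "hirsch_sol f \<theta> (f (f \<theta>))"
      unfolding hirsch_sol_def
    proof (intro conjI)
      show "f (f \<theta>) \<ge> 0" using nn th by auto
      show "f (f (f \<theta>)) = \<theta> * f (f \<theta>)" using B th by auto
      show "\<not> (f 0 = 0 \<and> f (f \<theta>) = 0)"
      proof
        assume h: "f 0 = 0 \<and> f (f \<theta>) = 0"
        define t where "t = (if f \<theta> = 0 then \<theta> else f \<theta>)"
        have t: "t > 0" "f t = 0" using h th nn unfolding t_def by (auto simp: less_eq_real_def)
        show False
        proof (cases "\<exists>q>t. f q > 0")
          case True
          then obtain q where "q > t" "f q > 0" by blast
          then show False using caseA[OF nn cont wd _ B t] h by blast
        next
          case False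
          hence "\<forall>q>t. f q = 0" using nn t by (metis less_eq_real_def less_trans)
          then show False using caseB[OF nn cont wd _ B t] h by blast
        qed
      qed
    qed
    have "\<exists>!y. hirsch_sol f \<theta> y" using wd th unfolding hirsch_well_defined_def by blast
    thus "hirsch f \<theta> = f (f \<theta>)" unfolding hirsch_def using sol by (rule the1_equality)
  qed
qed

end
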